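(* Let $(X,d_X,m_X)$, $(Y,d_Y,m_Y)$ be metric measure spaces and $p:X\to Y$ a 1-Lipschitz map with $p_*m_X=m_Y$, and let $\{\mu_y\}_{y\in Y}$ be a disintegration of $m_X$ for $p$. Assume there is a Borel set $\Omega\subset Y$ with $m_Y(Y\setminus\Omega)=0$ such that $W_2(\mu_y,\mu_{y'})=d_Y(y,y')$ for all $y,y'\in\Omega$. Let $y_0,y_1\in Y$ satisfy $W_2(\mu_{y_0},\mu_{y_1})=d_Y(y_0,y_1)$ and $p_*\mu_{y_i}=\delta_{y_i}$ for $i=0,1$. Then every optimal transport plan for $W_2(\mu_{y_0},\mu_{y_1})$ is concentrated on $\{(x,x')\in p^{-1}(y_0)\times p^{-1}(y_1): d_X(x,x')=d_Y(y_0,y_1)\}$.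
   Context: A metric measure space $(X,d,m)$: complete separable metric space with Borel measure satisfying $0<m(B_r(x))<\infty$ for all $x$, $r>0$. A disintegration of $m_X$ for $p$ is a family $\{\mu_y\}_{y\in Y}$ of Borel probability measures on $X$ such that $y\mapsto\mu_y(A)$ is Borel for all Borel $A$, $\mu_y(X\setminus p^{-1}(y))=0$ for $m_Y$-a.e. $y$, and $\int_Xf\,dm_X=\int_Y\int_Xf\,d\mu_y\,dm_Y(y)$ for every Borel $f:X\to[0,\infty]$. $W_2$ is the quadratic Wasserstein distance (possibly $+\infty$). *)

theory Defs
  imports "HOL-Probability.Probability"
begin

definition mms :: "('a::polish_space) measure \<Rightarrow> bool" where
  "mms m \<longleftrightarrow> sets m = sets borel \<and>
     (\<forall>x r. r > 0 \<longrightarrow> 0 < emeasure m (ball x r) \<and> emeasure m (ball x r) < \<infinity>)"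

definition lipschitz1 :: "('a::metric_space \<Rightarrow> 'b::metric_space) \<Rightarrow> bool" where
  "lipschitz1 p \<longleftrightarrow> (\<forall>x x'. dist (p x) (p x') \<le> dist x x')"

definition disintegration ::
  "('a::polish_space) measure \<Rightarrow> ('b::polish_space) measure \<Rightarrow> ('a \<Rightarrow> 'b) \<Rightarrow> ('b \<Rightarrow> 'a measure) \<Rightarrow> bool" where
  "disintegration mX mY p \<mu> \<longleftrightarrow>
     (\<forall>y. prob_space (\<mu> y) \<and> sets (\<mu> y) = sets borel) \<and>
     (\<forall>A \<in> sets borel. (\<lambda>y. emeasure (\<mu> y) A) \<in> borel_measurable mY) \<and>
     (AE y in mY. emeasure (\<mu> y) (UNIV - p -` {y}) = 0) \<and>
     (\<forall>f :: 'a \<Rightarrow> ennreal. f \<in> borel_measurable borel \<longrightarrow>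
        (\<integral>\<^sup>+ x. f x \<partial>mX) = (\<integral>\<^sup>+ y. (\<integral>\<^sup>+ x. f x \<partial>\<mu> y) \<partial>mY))"

definition couplings :: "('a::polish_space) measure \<Rightarrow> 'a measure \<Rightarrow> ('a \<times> 'a) measure set" where
  "couplings \<mu> \<nu> = {\<pi>. prob_space \<pi> \<and> sets \<pi> = sets borel \<and>
      distr \<pi> borel fst = \<mu> \<and> distr \<pi> borel snd = \<nu>}"

definition transport_cost :: "('a::metric_space \<times> 'a) measure \<Rightarrow> ennreal" where
  "transport_cost \<pi> = (\<integral>\<^sup>+ z. ennreal ((dist (fst z) (snd z))\<^sup>2) \<partial>\<pi>)"

definition W2sq :: "('a::polish_space) measure \<Rightarrow> 'a measure \<Rightarrow> ennreal" where
  "W2sq \<mu> \<nu> = (INF \<pi> \<in> couplings \<mu> \<nu>. transport_cost \<pi>)"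

definition W2 :: "('a::polish_space) measure \<Rightarrow> 'a measure \<Rightarrow> ennreal" where
  "W2 \<mu> \<nu> = (if W2sq \<mu> \<nu> = \<infinity> then \<infinity> else ennreal (sqrt (enn2real (W2sq \<mu> \<nu>))))"

definition optimal_plan :: "('a::polish_space) measure \<Rightarrow> 'a measure \<Rightarrow> ('a \<times> 'a) measure \<Rightarrow> bool" where
  "optimal_plan \<mu> \<nu> \<pi> \<longleftrightarrow> \<pi> \<in> couplings \<mu> \<nu> \<and> transport_cost \<pi> = W2sq \<mu> \<nu>"

end

theory Submission
  imports Defs
begin

lemma lip_cont: "lipschitz1 p \<Longrightarrow> continuous_on UNIV p"
  unfolding lipschitz1_def continuous_on_iff
  by (metis le_less_trans)

lemma marg_AE:
  fixes p :: "'a::polish_space \<Rightarrow> 'b::polish_space"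
  assumes pm: "p \<in> borel_measurable borel"
    and pi: "sets \<pi> = sets (borel :: ('a \<times> 'a) measure)"
    and f: "f \<in> borel_measurable (borel :: ('a \<times> 'a) measure)"
    and d1: "distr \<pi> borel f = \<nu>" and d2: "distr \<nu> borel p = return borel y"
  shows "AE z in \<pi>. p (f z) = y"
proof -
  have fm: "f \<in> measurable \<pi> borel" by (subst measurable_cong_sets[OF pi refl]) (rule f)
  have pr: "{x \<in> space borel. p x = y} \<in> sets borel"
  proof -
    have "{x \<in> space borel. p x = y} = p -` {y} \<inter> space borel" by auto
    also have "\<dots> \<in> sets borel" by (rule measurable_sets[OF pm borel_closed[OF closed_singleton]])
    finally show ?thesis .
  qed
  have sn: "sets \<nu> = sets borel" using d1 by auto
  have pm': "p \<in> measurable \<nu> borel" by (subst measurable_cong_sets[OF sn refl]) (rule pm)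
  have "AE x in return borel y. x = y"
    by (subst AE_return) auto
  then have "AE x in distr \<nu> borel p. x = y" unfolding d2 .
  then have "AE x in \<nu>. p x = y"
  proof -
    have p2: "{x \<in> space borel. x = y} \<in> sets borel"
    proof -
      have "{x \<in> space borel. x = y} = {y}" by auto
      then show ?thesis using borel_closed[OF closed_singleton] by simp
    qed
    show ?thesis using AE_distr_iff[OF pm' p2] \<open>AE x in distr \<nu> borel p. x = y\<close> by (rule iffD1)
  qed
  then have "AE x in distr \<pi> borel f. p x = y" unfolding d1 .
  then show ?thesis by (rule iffD1[OF AE_distr_iff[OF fm pr]])
qed

lemma W_lemma:
  assumes "W2 a b = ennreal D" "0 \<le> D"
  shows "W2sq a b = ennreal (D\<^sup>2)"
proof -
  have ninf: "W2sq a b \<noteq> \<infinity>"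
    using assms(1) unfolding W2_def by (cases "W2sq a b = \<infinity>") auto
  then have e: "ennreal (sqrt (enn2real (W2sq a b))) = ennreal D"
    using assms(1) unfolding W2_def by simp
  have "sqrt (enn2real (W2sq a b)) = D"
    using ennreal_inj[OF real_sqrt_ge_zero[OF enn2real_nonneg] assms(2)] e by simp
  moreover have "enn2real (W2sq a b) = (sqrt (enn2real (W2sq a b)))\<^sup>2"
    by simp
  ultimately have e2: "enn2real (W2sq a b) = D\<^sup>2"
    by simp
  have "W2sq a b = ennreal (enn2real (W2sq a b))"
    using ninf by (simp add: top.not_eq_extremum)
  then show ?thesis unfolding e2 .
qed

theorem proposition3p10:
  fixes mX :: "('a::polish_space) measure" and mY :: "('b::polish_space) measure"
    and p :: "'a \<Rightarrow> 'b" and \<mu> :: "'b \<Rightarrow> 'a measure"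
    and \<Omega> :: "'b set" and y0 y1 :: 'b
  assumes "mms mX" and "mms mY"
    and "lipschitz1 p"
    and "distr mX mY p = mY"
    and "disintegration mX mY p \<mu>"
    and "\<Omega> \<in> sets borel" and "emeasure mY (UNIV - \<Omega>) = 0"
    and "\<forall>y\<in>\<Omega>. \<forall>y'\<in>\<Omega>. W2 (\<mu> y) (\<mu> y') = ennreal (dist y y')"
    and "W2 (\<mu> y0) (\<mu> y1) = ennreal (dist y0 y1)"
    and "distr (\<mu> y0) borel p = return borel y0"
    and "distr (\<mu> y1) borel p = return borel y1"
  shows "\<forall>\<pi>. optimal_plan (\<mu> y0) (\<mu> y1) \<pi> \<longrightarrow>
           (AE z in \<pi>. p (fst z) = y0 \<and> p (snd z) = y1 \<and> dist (fst z) (snd z) = dist y0 y1)"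
proof (intro allI impI)
  fix \<pi> assume opt: "optimal_plan (\<mu> y0) (\<mu> y1) \<pi>"
  define D where "D = dist y0 y1"
  have pm: "p \<in> borel_measurable borel"
    using lip_cont[OF assms(3)] by (rule borel_measurable_continuous_onI)
  from opt have ps: "prob_space \<pi>" and pi: "sets \<pi> = sets borel"
    and d0: "distr \<pi> borel fst = \<mu> y0" and d1: "distr \<pi> borel snd = \<mu> y1"
    and tc: "transport_cost \<pi> = W2sq (\<mu> y0) (\<mu> y1)"
    unfolding optimal_plan_def couplings_def by auto
  have fstm: "fst \<in> borel_measurable (borel :: ('a \<times> 'a) measure)"
    by (intro borel_measurable_continuous_onI continuous_intros)
  have sndm: "snd \<in> borel_measurable (borel :: ('a \<times> 'a) measure)"
    by (intro borel_measurable_continuous_onI continuous_intros)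
  have A0: "AE z in \<pi>. p (fst z) = y0"
    by (rule marg_AE[OF pm pi fstm d0 assms(10)])
  have A1: "AE z in \<pi>. p (snd z) = y1"
    by (rule marg_AE[OF pm pi sndm d1 assms(11)])
  have Age: "AE z in \<pi>. D \<le> dist (fst z) (snd z)"
    using A0 A1
  proof eventually_elim
    case (elim z)
    have "dist (p (fst z)) (p (snd z)) \<le> dist (fst z) (snd z)"
      using assms(3) unfolding lipschitz1_def by blast
    then show ?case using elim unfolding D_def by simp
  qed
  have D0: "0 \<le> D" by (simp add: D_def)
  have W: "W2sq (\<mu> y0) (\<mu> y1) = ennreal (D\<^sup>2)"
    by (rule W_lemma[OF assms(9)[folded D_def] D0])
  define g where "g z = ennreal ((dist (fst z) (snd z))\<^sup>2 - D\<^sup>2)" for z :: "'a \<times> 'a"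
  have distm: "(\<lambda>z::'a\<times>'a. dist (fst z) (snd z)) \<in> borel_measurable \<pi>"
    by (subst measurable_cong_sets[OF pi refl])
      (intro borel_measurable_continuous_onI continuous_intros)
  have gm: "g \<in> borel_measurable \<pi>" unfolding g_def
    by (intro measurable_compose[OF _ measurable_ennreal] borel_measurable_diff
        borel_measurable_power distm borel_measurable_const)
  have "integral\<^sup>N \<pi> g + integral\<^sup>N \<pi> (\<lambda>z. ennreal (D\<^sup>2)) = integral\<^sup>N \<pi> (\<lambda>z. g z + ennreal (D\<^sup>2))"
    by (rule nn_integral_add[symmetric]) (use gm in auto)
  also have "\<dots> = integral\<^sup>N \<pi> (\<lambda>z. ennreal ((dist (fst z) (snd z))\<^sup>2))"
  proof (rule nn_integral_cong_AE)
    show "AE z in \<pi>. g z + ennreal (D\<^sup>2) = ennreal ((dist (fst z) (snd z))\<^sup>2)"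
      using Age
    proof (rule eventually_mono)
      fix z :: "'a \<times> 'a" assume "D \<le> dist (fst z) (snd z)"
      then have "D\<^sup>2 \<le> (dist (fst z) (snd z))\<^sup>2" using D0 by (simp add: power_mono)
      then show "g z + ennreal (D\<^sup>2) = ennreal ((dist (fst z) (snd z))\<^sup>2)"
        unfolding g_def by (subst ennreal_plus[symmetric]) auto
    qed
  qed
  also have "\<dots> = ennreal (D\<^sup>2)" using tc W unfolding transport_cost_def by simp
  finally have eq: "integral\<^sup>N \<pi> g + ennreal (D\<^sup>2) = ennreal (D\<^sup>2)"
    using prob_space.emeasure_space_1[OF ps] by simp
  have "integral\<^sup>N \<pi> g = 0"
  proof -
    have "ennreal (D\<^sup>2) + integral\<^sup>N \<pi> g = ennreal (D\<^sup>2) + 0"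
      using eq by (simp add: add.commute)
    then show ?thesis unfolding ennreal_add_left_cancel by simp
  qed
  then have "AE z in \<pi>. g z = 0" using nn_integral_0_iff_AE[OF gm] by simp
  then have "AE z in \<pi>. dist (fst z) (snd z) = D"
    using Age
  proof (eventually_elim)
    case (elim z)
    then have "(dist (fst z) (snd z))\<^sup>2 \<le> D\<^sup>2" unfolding g_def ennreal_eq_0_iff by simp
    then have "dist (fst z) (snd z) \<le> D" using D0 by (rule power2_le_imp_le)
    then show ?case using elim(2) by linarith
  qed
  then show "AE z in \<pi>. p (fst z) = y0 \<and> p (snd z) = y1 \<and> dist (fst z) (snd z) = dist y0 y1"
    using A0 A1 unfolding D_def by eventually_elim blast
qed

end
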